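(* Let $\varepsilon>0$ and let $\tau\in F_2$ with $\operatorname{Im}\tau_{12}\ge\varepsilon$ and $\operatorname{Im}\tau_1\ge\max\{1/\varepsilon,31\}$. Let $a=(\tfrac12,\tfrac12)$ and $b=(0,0)$ or $b=(\tfrac12,\tfrac12)$. Then $$|\theta_{a,b}(0,\tau)|\,e^{\pi\,{}^ta\operatorname{Im}\tau\,a}\ge\min\{\varepsilon/2,\ 0{,}31\}.$$
   Context: $F_2$ is the standard Siegel fundamental domain for $\mathrm{Sp}_4(\mathbb{Z})$ acting on symmetric complex $2\times2$ matrices $\tau=\begin{pmatrix}\tau_1&\tau_{12}\\ \tau_{12}&\tau_2\end{pmatrix}$ with $\operatorname{Im}\tau>0$; every $\tau\in F_2$ satisfies $|\operatorname{Re}\tau_{ij}|\le 1/2$, $\operatorname{Im}\tau_2\ge\operatorname{Im}\tau_1\ge 2\operatorname{Im}\tau_{12}\ge 0$, $\operatorname{Im}\tau_1\ge\sqrt3/2$. $\theta_{a,b}(Z,\tau)=\sum_{n\in\mathbb{Z}^2}\exp\big(2i\pi(\tfrac12{}^t(n+a)\tau(n+a)+{}^t(n+a)(Z+b))\big)$. *)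

theory Defs
  imports "HOL-Analysis.Analysis"
begin

definition im_mat :: "complex^2^2 \<Rightarrow> real^2^2" where
  "im_mat \<tau> = (\<chi> i j. Im (\<tau>$i$j))"

definition re_mat :: "complex^2^2 \<Rightarrow> real^2^2" where
  "re_mat \<tau> = (\<chi> i j. Re (\<tau>$i$j))"

definition of_int_mat :: "int^2^2 \<Rightarrow> complex^2^2" where
  "of_int_mat M = (\<chi> i j. of_int (M$i$j))"

definition siegel_H2 :: "(complex^2^2) set" where
  "siegel_H2 = {\<tau>. transpose \<tau> = \<tau> \<and>
     (\<forall>v::real^2. v \<noteq> 0 \<longrightarrow> v \<bullet> (im_mat \<tau> *v v) > 0)}"

text \<open>Sp_4(Z) in block form M = (A B; C D): the condition M^T J M = J with
  J = (0 I; -I 0), written out blockwise.\<close>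
definition sp4Z :: "((int^2^2) \<times> (int^2^2) \<times> (int^2^2) \<times> (int^2^2)) set" where
  "sp4Z = {(A,B,C,D). transpose A ** C - transpose C ** A = 0 \<and>
                     transpose B ** D - transpose D ** B = 0 \<and>
                     transpose A ** D - transpose C ** B = mat 1}"

definition F2 :: "(complex^2^2) set" where
  "F2 = {\<tau> \<in> siegel_H2.
     (\<forall>(A,B,C,D)\<in>sp4Z. cmod (det (of_int_mat C ** \<tau> + of_int_mat D)) \<ge> 1) \<and>
     (0 \<le> 2 * Im (\<tau>$1$2) \<and> 2 * Im (\<tau>$1$2) \<le> Im (\<tau>$1$1) \<and> Im (\<tau>$1$1) \<le> Im (\<tau>$2$2)) \<and>
     (\<forall>i j. \<bar>Re (\<tau>$i$j)\<bar> \<le> 1/2)}"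

definition theta_char :: "real^2 \<Rightarrow> real^2 \<Rightarrow> complex^2 \<Rightarrow> complex^2^2 \<Rightarrow> complex" where
  "theta_char a b Z \<tau> = (\<Sum>\<^sub>\<infinity>n::int^2 \<in> UNIV.
     (let v = (\<chi> i. of_real (of_int (n$i) + a$i)) :: complex^2 in
      exp (2 * pi * \<i> * ((1/2) * (\<Sum>i\<in>UNIV. \<Sum>j\<in>UNIV. v$i * \<tau>$i$j * v$j)
                         + (\<Sum>i\<in>UNIV. v$i * (Z$i + of_real (b$i)))))))"

end

theory Submission
  imports Defs
begin


definition thterm :: "real^2 \<Rightarrow> real^2 \<Rightarrow> complex^2^2 \<Rightarrow> int^2 \<Rightarrow> complex" where
  "thterm a b \<tau> n = (let v = (\<chi> i. of_real (of_int (n$i) + a$i)) :: complex^2 in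
      exp (2 * pi * \<i> * ((1/2) * (\<Sum>i\<in>UNIV. \<Sum>j\<in>UNIV. v$i * \<tau>$i$j * v$j)
                         + (\<Sum>i\<in>UNIV. v$i * ((0::complex^2)$i + of_real (b$i))))))"

lemma theta_eq: "theta_char a b 0 \<tau> = infsum (thterm a b \<tau>) UNIV"
  unfolding theta_char_def thterm_def by simp

lemma norm_thterm:
  "cmod (thterm a b \<tau> n) = exp (- pi * (\<Sum>i\<in>UNIV. \<Sum>j\<in>UNIV. (of_int (n$i) + a$i) * Im (\<tau>$i$j) * (of_int (n$j) + a$j)))"
  unfolding thterm_def Let_def norm_exp_eq_Re
  by (simp add: Im_sum sum_distrib_left mult.assoc sum_negf)

lemma norm_thterm2:
  assumes "\<tau>$2$1 = \<tau>$1$2"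
  shows "cmod (thterm a b \<tau> (vector[x,y])) = exp (- pi * ((of_int x + a$1)^2 * Im (\<tau>$1$1)
     + 2 * (of_int x + a$1) * (of_int y + a$2) * Im (\<tau>$1$2) + (of_int y + a$2)^2 * Im (\<tau>$2$2)))"
  unfolding norm_thterm using assms by (simp add: sum_2 power2_eq_square algebra_simps)




lemma vec_decomp: "(n::'a::zero^2) = vector[n$1, n$2]"
  by (simp add: vec_eq_iff forall_2)

lemma sym_eq1:
  assumes "\<tau>$2$1 = \<tau>$1$2" "b = 0 \<or> b = (\<chi> i. 1/2)"
  shows "thterm (\<chi> i. 1/2) b \<tau> (vector[-1,-1]) = thterm (\<chi> i. 1/2) b \<tau> (vector[0,0])"
  using assms(2)
proof
  assume "b = 0" then show ?thesis using assms(1) by (simp add: thterm_def sum_2 algebra_simps)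
next
  assume b: "b = (\<chi> i. 1/2)"
  have "exp (2 * pi * \<i> * ((1/2) * (\<Sum>i\<in>UNIV. \<Sum>j\<in>UNIV. (\<chi> i. of_real (of_int ((vector[-1,-1]::int^2)$i) + 1/2) :: complex^2)$i * \<tau>$i$j * (\<chi> i. of_real (of_int ((vector[-1,-1]::int^2)$i) + 1/2) :: complex^2)$j)
                         + (\<Sum>i\<in>UNIV. (\<chi> i. of_real (of_int ((vector[-1,-1]::int^2)$i) + 1/2) :: complex^2)$i * ((0::complex^2)$i + of_real (b$i)))))
       = exp (2 * pi * \<i> * ((1/2) * (\<Sum>i\<in>UNIV. \<Sum>j\<in>UNIV. (\<chi> i. of_real (of_int ((vector[0,0]::int^2)$i) + 1/2) :: complex^2)$i * \<tau>$i$j * (\<chi> i. of_real (of_int ((vector[0,0]::int^2)$i) + 1/2) :: complex^2)$j)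
                         + (\<Sum>i\<in>UNIV. (\<chi> i. of_real (of_int ((vector[0,0]::int^2)$i) + 1/2) :: complex^2)$i * ((0::complex^2)$i + of_real (b$i))))) * exp (2*pi*\<i> * of_int (-1))"
    unfolding exp_add[symmetric] by (rule arg_cong[where f=exp]) (simp add: b sum_2 assms(1) algebra_simps)
  then show ?thesis unfolding thterm_def Let_def by (simp add: exp_minus)
qed




lemma sym_eq2:
  assumes "\<tau>$2$1 = \<tau>$1$2" "b = 0 \<or> b = (\<chi> i. 1/2)"
  shows "thterm (\<chi> i. 1/2) b \<tau> (vector[-1,0]) = thterm (\<chi> i. 1/2) b \<tau> (vector[0,-1])"
  using assms(2)
proof
  assume "b = 0" then show ?thesis using assms(1) by (simp add: thterm_def sum_2 algebra_simps)
next
  assume b: "b = (\<chi> i. 1/2)"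
  then show ?thesis using assms(1) by (simp add: thterm_def sum_2 algebra_simps)
qed

definition psi :: "real \<Rightarrow> int \<Rightarrow> real" where
  "psi w k = (if k \<ge> 0 then w ^ nat k else w ^ nat (-k-1))"

lemma psi_has_sum:
  assumes "0 \<le> w" "w < 1"
  shows "(psi w has_sum (2 / (1 - w))) UNIV"
proof -
  have g: "((\<lambda>m::nat. w ^ m) has_sum (1 / (1 - w))) UNIV"
    by (rule sums_nonneg_imp_has_sum) (use assms in \<open>auto intro!: geometric_sums\<close>)
  have h1: "(psi w has_sum (1 / (1 - w))) (range int)"
    by (subst has_sum_reindex) (auto simp: o_def psi_def g)
  have inj2: "inj (\<lambda>m::nat. - int m - 1)" by (auto simp: inj_def)
  have h2: "(psi w has_sum (1 / (1 - w))) (range (\<lambda>m::nat. - int m - 1))"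
    by (subst has_sum_reindex[OF inj2]) (auto simp: o_def psi_def g)
  have U: "range int \<union> range (\<lambda>m::nat. - int m - 1) = UNIV"
  proof (rule set_eqI)
    fix k :: int
    show "k \<in> range int \<union> range (\<lambda>m::nat. - int m - 1) \<longleftrightarrow> k \<in> UNIV"
    proof (cases "k \<ge> 0")
      case True then have "k = int (nat k)" by simp
      then show ?thesis by blast
    next
      case False then have "k = - int (nat (-k-1)) - 1" by simp
      then show ?thesis by blast
    qed
  qed
  have D: "range int \<inter> range (\<lambda>m::nat. - int m - 1) = {}" by auto
  have "(psi w has_sum (1 / (1 - w) + 1 / (1 - w))) UNIV"
    using has_sum_Un_disjoint[OF h1 h2 D] U by simp
  then show ?thesis by (simp add: field_simps)
qed

lemma psi_nonneg: "0 \<le> w \<Longrightarrow> 0 \<le> psi w k" by (simp add: psi_def)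

lemma psi_finite_le:
  assumes "0 \<le> w" "w < 1" "finite A"
  shows "sum (psi w) A \<le> 2 / (1 - w)"
  by (rule finite_sum_le_has_sum[OF psi_has_sum[OF assms(1,2)]]) (auto simp: assms psi_nonneg)




definition mm :: "int \<Rightarrow> real" where "mm k = (if k \<ge> 0 then of_int k else of_int (-k-1))"

lemma psi_exp: "psi (exp (-c)) k = exp (-c * mm k)"
proof -
  have "exp (-c) ^ n = exp (-c * real n)" for n :: nat
    by (metis exp_of_nat_mult mult.commute)
  then show ?thesis by (simp add: psi_def mm_def)
qed

lemma kk_ge: fixes x :: int shows "x*(x+1) \<ge> 2 * (if x \<ge> 0 then x else -x-1)"
proof (cases "x \<ge> 0")
  case True
  then show ?thesis by (cases "x = 0") (auto simp: algebra_simps intro: order_trans[of _ "x*x"] mult_left_mono[of 1 x x, simplified])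
next
  case False
  then have "-x-1 \<ge> 0" by simp
  have "x*(x+1) = (-x-1)*(-x-1+1)" by (simp add: algebra_simps)
  moreover have "(-x-1)*(-x-1+1) \<ge> 2*(-x-1)" 
  proof (cases "x = -1")
    case False
    with \<open>\<not> x \<ge> 0\<close> have "-x-1+1 \<ge> 2" by simp
    then show ?thesis using \<open>-x-1 \<ge> 0\<close> by (metis mult.commute mult_left_mono)
  qed simp
  ultimately show ?thesis using False by simp
qed

lemma kk_nonneg: fixes x :: int shows "x*(x+1) \<ge> 0"
  using kk_ge[of x] by (smt (verit))

lemma kk_ge2: fixes x :: int assumes "x \<noteq> 0" "x \<noteq> -1" shows "x*(x+1) \<ge> 2"
  using kk_ge[of x] assms by (smt (verit))

lemma D_bound:
  fixes x y :: int and y1 y2 t :: real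
  assumes t0: "0 \<le> t" and ty: "2*t \<le> y1" and yy: "y1 \<le> y2"
    and np: "\<not> (x \<in> {0,-1} \<and> y \<in> {0,-1})"
  shows "(x+1/2)^2*y1 + 2*(x+1/2)*(y+1/2)*t + (y+1/2)^2*y2 - (y1+2*t+y2)/4 \<ge> y1*(mm x + mm y)/2"
proof -
  define k1 where "k1 = real_of_int (x*(x+1))"
  define k2 where "k2 = real_of_int (y*(y+1))"
  have k1: "k1 \<ge> 0" "k1 \<ge> 2 * mm x"
  proof -
    have a: "of_int (2 * (if x\<ge>0 then x else -x-1)) \<le> (of_int (x*(x+1))::real)" using kk_ge[of x] by (simp only: of_int_le_iff)
    show "k1 \<ge> 0" unfolding k1_def using kk_nonneg[of x] by (simp only: of_int_0_le_iff)
    show "k1 \<ge> 2 * mm x" using a unfolding k1_def mm_def by (cases "x\<ge>0") simp_all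
  qed
  have k2: "k2 \<ge> 0" "k2 \<ge> 2 * mm y"
  proof -
    have a: "of_int (2 * (if y\<ge>0 then y else -y-1)) \<le> (of_int (y*(y+1))::real)" using kk_ge[of y] by (simp only: of_int_le_iff)
    show "k2 \<ge> 0" unfolding k2_def using kk_nonneg[of y] by (simp only: of_int_0_le_iff)
    show "k2 \<ge> 2 * mm y" using a unfolding k2_def mm_def by (cases "y\<ge>0") simp_all
  qed
  have ks: "k1 + k2 \<ge> 2"
  proof -
    have "x \<notin> {0,-1} \<or> y \<notin> {0,-1}" using np by blast
    then show ?thesis
    proof
      assume "x \<notin> {0,-1}" then have "(of_int 2::real) \<le> of_int (x*(x+1))" using kk_ge2[of x] by (simp only: of_int_le_iff) simp
      then have "k1 \<ge> 2" unfolding k1_def by simp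
      then show ?thesis using k2 by simp
    next
      assume "y \<notin> {0,-1}" then have "(of_int 2::real) \<le> of_int (y*(y+1))" using kk_ge2[of y] by (simp only: of_int_le_iff) simp
      then have "k2 \<ge> 2" unfolding k2_def by simp
      then show ?thesis using k1 by simp
    qed
  qed
  have y10: "y1 \<ge> 0" using t0 ty by simp
  have eq: "(x+1/2)^2*y1 + 2*(x+1/2)*(y+1/2)*t + (y+1/2)^2*y2 - (y1+2*t+y2)/4
     = y1*k1 + y2*k2 + 2*t*((x+1/2)*(y+1/2) - 1/4)"
    unfolding k1_def k2_def by (simp add: algebra_simps power2_eq_square)
  have pq: "(x+1/2)*(y+1/2) - 1/4 \<ge> -(k1+k2+1)/2"
  proof -
    have "0 \<le> ((x+1/2) + (y+1/2))^2" by simp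
    then show ?thesis unfolding k1_def k2_def by (simp add: algebra_simps power2_eq_square)
  qed
  have s1: "2*t*((x+1/2)*(y+1/2) - 1/4) \<ge> 2*t*(-(k1+k2+1)/2)"
    using pq t0 by (intro mult_left_mono) auto
  have s2: "t*(k1+k2+1) \<le> (y1/2)*(k1+k2+1)"
    using ty k1 k2 by (intro mult_right_mono) auto
  have s3: "y2*k2 \<ge> y1*k2" using yy k2 by (intro mult_right_mono) auto
  have s4: "y1*((k1+k2)/4 - 1/2) \<ge> 0" using y10 ks by simp
  have s5: "y1*(k1+k2) \<ge> y1*(2*mm x + 2*mm y)" using y10 k1 k2 by (intro mult_left_mono) auto
  show ?thesis unfolding eq using s1 s2 s3 s4 s5 by (simp add: algebra_simps)
qed

lemma vmap_inj: "inj (\<lambda>(x::int,y). vector[x,y] :: int^2)"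
  by (auto simp: inj_def vec_eq_iff forall_2)

lemma h_finite_le:
  fixes F :: "(int^2) set"
  assumes "0 \<le> w" "w < 1" "finite F"
  shows "(\<Sum>n\<in>F. psi w (n$1) * psi w (n$2)) \<le> (2/(1-w))^2"
proof -
  define A where "A = (\<lambda>n::int^2. n$1) ` F \<union> (\<lambda>n. n$2) ` F"
  have fA: "finite A" using assms(3) by (simp add: A_def)
  have sub: "F \<subseteq> (\<lambda>(x::int,y). vector[x,y] :: int^2) ` (A \<times> A)"
  proof
    fix n assume "n \<in> F"
    then have "(n$1, n$2) \<in> A \<times> A" by (auto simp: A_def)
    moreover have "n = (\<lambda>(x::int,y). vector[x,y] :: int^2) (n$1, n$2)" using vec_decomp[of n] by simp
    ultimately show "n \<in> (\<lambda>(x::int,y). vector[x,y] :: int^2) ` (A \<times> A)" by blast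
  qed
  have "(\<Sum>n\<in>F. psi w (n$1) * psi w (n$2)) \<le> (\<Sum>n\<in>(\<lambda>(x::int,y). vector[x,y] :: int^2) ` (A \<times> A). psi w (n$1) * psi w (n$2))"
    using sub fA assms by (intro sum_mono2) (auto simp: psi_nonneg)
  also have "\<dots> = (\<Sum>(x,y)\<in>A \<times> A. psi w x * psi w y)"
    by (subst sum.reindex) (auto intro: inj_on_subset[OF vmap_inj] simp: case_prod_beta)
  also have "\<dots> = sum (psi w) A * sum (psi w) A"
    by (simp add: sum_product sum.cartesian_product)
  also have "\<dots> \<le> (2/(1-w)) * (2/(1-w))"
    using psi_finite_le[OF assms(1,2) fA] assms by (intro mult_mono) (auto simp: sum_nonneg psi_nonneg)
  finally show ?thesis by (simp add: power2_eq_square)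
qed




lemma vector_eq_iff2: "(vector[a,b] :: int^2) = vector[c,d] \<longleftrightarrow> a = c \<and> b = d"
  by (auto simp: vec_eq_iff forall_2)

lemma final_arith:
  fixes y1 t \<epsilon> :: real
  assumes e0: "\<epsilon> > 0" and te: "t \<ge> \<epsilon>" and y31: "y1 \<ge> 31" and ye: "y1 \<ge> 1/\<epsilon>"
  shows "2*(exp (pi*t) - 1) - ((2/(1 - exp (-(pi*y1/2))))^2 - 4) \<ge> \<epsilon>/2"
proof -
  define w where "w = exp (-(pi*y1/2))"
  have w0: "w > 0" by (simp add: w_def)
  have ey: "exp y1 \<ge> 2*y1"
  proof -
    have "exp y1 = exp (y1/2) * exp (y1/2)" by (simp flip: exp_add)
    moreover have "\<dots> \<ge> (1 + y1/2) * (1 + y1/2)"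
      using exp_ge_add_one_self[of "y1/2"] y31 by (intro mult_mono) auto
    moreover have "(1 + y1/2)*(1+y1/2) - 2*y1 = (1 - y1/2)^2" by (simp add: power2_eq_square algebra_simps)
    ultimately show ?thesis by (smt (verit) zero_le_power2)
  qed
  have "3*y1 \<le> pi*y1" using y31 pi_gt3 by (intro mult_right_mono) auto
  then have ee: "exp (pi*y1/2) \<ge> exp y1" using y31 by simp
  have E2: "exp (pi*y1/2) \<ge> 2*y1" using ey ee by linarith
  have wy: "w * (2*y1) \<le> 1"
  proof -
    have "w * exp (pi*y1/2) = 1" by (simp add: w_def flip: exp_add)
    then show ?thesis using E2 w0 by (smt (verit) mult_left_mono)
  qed
  have "w * 62 \<le> w * (2*y1)" using y31 w0 by (intro mult_left_mono) auto
  then have w18: "w \<le> 1/18" using wy by linarith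
  have eps_ge: "\<epsilon> \<ge> 1/y1" using ye e0 y31 by (smt (verit) divide_le_eq mult.commute le_divide_eq)
  have w_eps: "w \<le> \<epsilon>/2"
  proof -
    have "w \<le> 1/(2*y1)" using wy y31 by (simp add: field_simps)
    also have "\<dots> \<le> \<epsilon>/2" using eps_ge y31 by (simp add: field_simps)
    finally show ?thesis .
  qed
  have B: "(2/(1-w))^2 - 4 \<le> 9*w"
  proof -
    have "w*w \<le> w*(1/18)" using w18 w0 by (intro mult_left_mono) auto
    then have ww: "w*w \<le> w/18" by simp
    have "(1-w)^2 \<ge> 1 - 2*w" by (simp add: power2_eq_square algebra_simps)
    then have "(9*w+4)*(1-w)^2 \<ge> (9*w+4)*(1-2*w)" using w0 by (intro mult_left_mono) auto
    moreover have "(9*w+4)*(1-2*w) \<ge> 4" using ww by (simp add: algebra_simps)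
    ultimately have "4 \<le> (9*w+4)*(1-w)^2" by linarith
    moreover have "(1-w)^2 > 0" using w18 by simp
    ultimately have "4/(1-w)^2 \<le> 9*w+4" by (simp add: divide_le_eq)
    then show ?thesis by (simp add: power_divide)
  qed
  have "exp (pi*t) \<ge> 1 + pi*t" by (rule exp_ge_add_one_self)
  moreover have "pi*t \<ge> 3*\<epsilon>"
  proof -
    have "3*\<epsilon> \<le> pi*\<epsilon>" using e0 pi_gt3 by (intro mult_right_mono) auto
    also have "\<dots> \<le> pi*t" using te by (intro mult_left_mono) auto
    finally show ?thesis .
  qed
  ultimately have "\<epsilon>/2 \<le> 2*exp (pi*t) - 2 - X + 4" if "X - 4 \<le> 9*w" for X using w_eps that e0 by linarith
  then have "\<epsilon>/2 \<le> 2*(exp (pi*t) - 1) - (X - 4)" if "X - 4 \<le> 9*w" for X using that by (simp add: algebra_simps)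
  from this[OF B] have "2*(exp (pi*t) - 1) - ((2/(1-w))^2 - 4) \<ge> \<epsilon>/2" .
  then show ?thesis unfolding w_def .
qed




theorem mainTheorem15:
  fixes \<epsilon> :: real and \<tau> :: "complex^2^2" and a b :: "real^2"
  assumes "\<epsilon> > 0"
    and "\<tau> \<in> F2"
    and "Im (\<tau>$1$2) \<ge> \<epsilon>"
    and "Im (\<tau>$1$1) \<ge> max (1/\<epsilon>) 31"
    and "a = (\<chi> i. 1/2)"
    and "b = 0 \<or> b = (\<chi> i. 1/2)"
  shows "cmod (theta_char a b 0 \<tau>) * exp (pi * (a \<bullet> (im_mat \<tau> *v a))) \<ge> min (\<epsilon>/2) (31/100)"
proof -
  define y1 where "y1 = Im (\<tau>$1$1)"
  define y2 where "y2 = Im (\<tau>$2$2)"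
  define t where "t = Im (\<tau>$1$2)"
  have F: "transpose \<tau> = \<tau>" "0 \<le> 2 * t" "2 * t \<le> y1" "y1 \<le> y2"
    using assms(2) unfolding F2_def siegel_H2_def y1_def y2_def t_def by auto
  have sym: "\<tau>$2$1 = \<tau>$1$2"
  proof -
    have "(transpose \<tau>)$2$1 = \<tau>$2$1" using F(1) by simp
    then show ?thesis by (simp add: transpose_def)
  qed
  have te: "t \<ge> \<epsilon>" using assms(3) t_def by simp
  have y31: "y1 \<ge> 31" "y1 \<ge> 1/\<epsilon>" using assms(4) y1_def by auto
  have a12: "a$1 = 1/2" "a$2 = 1/2" using assms(5) by auto
  define q where "q = a \<bullet> (im_mat \<tau> *v a)"
  have q_eq: "q = (y1 + 2*t + y2)/4"
    unfolding q_def using sym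
    by (simp add: assms(5) inner_vec_def matrix_vector_mult_def im_mat_def sum_2 y1_def y2_def t_def field_simps)
  define E where "E = exp (pi * q)"
  define g where "g = thterm a b \<tau>"
  define w where "w = exp (-(pi*y1/2))"
  define h where "h = (\<lambda>n::int^2. psi w (n$1) * psi w (n$2))"
  define P :: "(int^2) set" where "P = {vector[0,0], vector[-1,-1], vector[0,-1], vector[-1,0]}"
  have w0: "0 \<le> w" "w < 1" using y31 unfolding w_def by auto
  have normg: "cmod (g (vector[x,y])) = exp (-pi*((x+1/2)^2*y1 + 2*(x+1/2)*(y+1/2)*t + (y+1/2)^2*y2))" for x y :: int
    unfolding g_def norm_thterm2[OF sym] a12 y1_def y2_def t_def by simp
  have tail: "E * cmod (g n) \<le> h n" if "n \<notin> P" for n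
  proof -
    obtain x y where n: "n = vector[x,y]" using vec_decomp[of n] by blast
    have np: "\<not> (x \<in> {0,-1} \<and> y \<in> {0,-1})" using that unfolding n P_def by auto
    have D: "(x+1/2)^2*y1 + 2*(x+1/2)*(y+1/2)*t + (y+1/2)^2*y2 - (y1+2*t+y2)/4 \<ge> y1*(mm x + mm y)/2"
      by (rule D_bound[OF _ F(3) F(4) np]) (use F(2) in simp)
    have "pi * (y1*(mm x + mm y)/2) \<le> pi * ((x+1/2)^2*y1 + 2*(x+1/2)*(y+1/2)*t + (y+1/2)^2*y2 - (y1+2*t+y2)/4)"
      using D by (intro mult_left_mono) auto
    then have ex: "pi*q + (-pi*((x+1/2)^2*y1 + 2*(x+1/2)*(y+1/2)*t + (y+1/2)^2*y2)) \<le> (-(pi*y1/2)*mm x) + (-(pi*y1/2)*mm y)"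
      unfolding q_eq by (simp add: algebra_simps add_divide_distrib)
    have "E * cmod (g n) = exp (pi*q + (-pi*((x+1/2)^2*y1 + 2*(x+1/2)*(y+1/2)*t + (y+1/2)^2*y2)))"
      unfolding n normg E_def exp_add by simp
    also have "\<dots> \<le> exp ((-(pi*y1/2)*mm x) + (-(pi*y1/2)*mm y))" using ex by simp
    also have "\<dots> = h n" unfolding h_def n w_def psi_exp exp_add by simp
    finally show ?thesis .
  qed
  have hnn: "h n \<ge> 0" for n unfolding h_def using w0 by (simp add: psi_nonneg)
  have Pfin: "finite P" unfolding P_def by simp
  have hP: "sum h P = 4"
    unfolding P_def h_def by (simp add: vector_eq_iff2 psi_def)
  have hfin: "sum h F \<le> (2/(1-w))^2 - 4" if "finite F" "F \<subseteq> UNIV - P" for F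
  proof -
    have "sum h F + sum h P = sum h (F \<union> P)" using that Pfin by (subst sum.union_disjoint) auto
    also have "\<dots> \<le> (2/(1-w))^2" unfolding h_def using h_finite_le[OF w0] that Pfin by simp
    finally show ?thesis using hP by simp
  qed
  have hsum: "h summable_on (UNIV - P)"
    by (rule nonneg_bdd_above_summable_on) (use hnn hfin in \<open>auto intro!: bdd_aboveI2\<close>)
  have hinf: "infsum h (UNIV - P) \<le> (2/(1-w))^2 - 4"
    by (rule infsum_le_finite_sums[OF hsum hfin]) auto
  have E0: "E > 0" unfolding E_def by simp
  have fb: "cmod (g n) \<le> h n * (1/E)" if "n \<in> UNIV - P" for n
    using tail[of n] that E0 by (simp add: field_simps mult.commute)
  have fsum: "(\<lambda>n. cmod (g n)) summable_on (UNIV - P)"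
    by (rule summable_on_comparison_test[OF summable_on_cmult_left[OF hsum] fb]) auto
  have gsum: "g summable_on (UNIV - P)"
    by (rule abs_summable_summable) (use fsum in simp)
  have split: "infsum g UNIV = sum g P + infsum g (UNIV - P)"
  proof -
    have "infsum g (P \<union> (UNIV - P)) = infsum g P + infsum g (UNIV - P)"
      by (rule infsum_Un_disjoint) (auto simp: Pfin gsum)
    then show ?thesis using Pfin by simp
  qed
  have tailb: "cmod (infsum g (UNIV - P)) \<le> ((2/(1-w))^2 - 4) * (1/E)"
  proof -
    have "cmod (infsum g (UNIV - P)) \<le> infsum (\<lambda>n. cmod (g n)) (UNIV - P)"
      by (rule norm_infsum_bound) (use fsum in simp)
    also have "\<dots> \<le> infsum (\<lambda>n. h n * (1/E)) (UNIV - P)"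
      by (rule infsum_mono[OF fsum summable_on_cmult_left[OF hsum] fb])
    also have "\<dots> = infsum h (UNIV - P) * (1/E)"
      by (rule infsum_cmult_left) (use hsum in simp)
    also have "\<dots> \<le> ((2/(1-w))^2 - 4) * (1/E)"
      using hinf E0 by (intro mult_right_mono) auto
    finally show ?thesis .
  qed
  have e1: "g (vector[-1,-1]) = g (vector[0,0])" unfolding g_def assms(5) using sym_eq1[OF sym assms(6)] .
  have e2: "g (vector[-1,0]) = g (vector[0,-1])" unfolding g_def assms(5) using sym_eq2[OF sym assms(6)] .
  have gP: "sum g P = 2 * g (vector[0,0]) + 2 * g (vector[0,-1])"
    unfolding P_def by (simp add: vector_eq_iff2 e1 e2)
  have n00: "E * cmod (g (vector[0,0])) = 1"
    unfolding normg E_def q_eq by (simp flip: exp_add add: algebra_simps power2_eq_square add_divide_distrib)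
  have n01: "E * cmod (g (vector[0,-1])) = exp (pi*t)"
    unfolding normg E_def q_eq by (simp flip: exp_add add: algebra_simps power2_eq_square add_divide_distrib)
  have main: "E * cmod (sum g P) \<ge> 2*(exp (pi*t) - 1)"
  proof -
    have "cmod (sum g P) \<ge> 2 * cmod (g (vector[0,-1])) - 2 * cmod (g (vector[0,0]))"
      unfolding gP using norm_diff_ineq[of "2 * g (vector[0,-1])" "2 * g (vector[0,0])"]
      by (simp add: norm_mult add.commute)
    then have "E * cmod (sum g P) \<ge> E * (2 * cmod (g (vector[0,-1])) - 2 * cmod (g (vector[0,0])))"
      using E0 by (intro mult_left_mono) auto
    then show ?thesis using n00 n01 by (simp add: algebra_simps)
  qed
  have tot: "E * cmod (infsum g UNIV) \<ge> 2*(exp (pi*t) - 1) - ((2/(1-w))^2 - 4)"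
  proof -
    have "cmod (infsum g UNIV) \<ge> cmod (sum g P) - cmod (infsum g (UNIV - P))"
      unfolding split by (rule norm_diff_ineq[THEN order_trans]) (simp add: norm_triangle_ineq4)
    then have "E * cmod (infsum g UNIV) \<ge> E * cmod (sum g P) - E * cmod (infsum g (UNIV - P))"
      using E0 by (simp add: right_diff_distrib[symmetric] mult_left_mono)
    moreover have "E * cmod (infsum g (UNIV - P)) \<le> (2/(1-w))^2 - 4"
      using tailb E0 by (simp add: field_simps)
    ultimately show ?thesis using main by linarith
  qed
  have fin: "2*(exp (pi*t) - 1) - ((2/(1-w))^2 - 4) \<ge> \<epsilon>/2"
    unfolding w_def by (rule final_arith[OF assms(1) te y31])
  have "cmod (theta_char a b 0 \<tau>) * exp (pi * (a \<bullet> (im_mat \<tau> *v a))) = E * cmod (infsum g UNIV)"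
    unfolding theta_eq E_def q_def g_def by simp
  then show ?thesis using tot fin by linarith
qed


end
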